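(* For $1\le i<r$, \[ C_{i+1,r}(a)=C_{i,r}(a)+\sum_{k=r-i+1}^{r-1}C_{r-i+1,k}(a)\,C_{r-k,r-k}(a)-\sum_{k=i}^{r-1}C_{i,k}(a)\,C_{r-k,r-k}(a) \] as polynomials in $a$.
   Context: Bernoulli polynomials $B_n(a)$: $\sum_{n\ge0}B_n(a)x^n/n!=xe^{ax}/(e^x-1)$. For $1\le i\le r$, let $S_{i,r}$ be the set of $(n_1,\dots,n_r)\in\mathbb Z_{\ge0}^r$ with $n_1+\dots+n_r=r$, $n_1+\dots+n_j<j$ ($1\le j<i$), and $n_{j+1}+\dots+n_r\le r-j$ ($i\le j<r$), and set $C_{i,r}(a)=(-1)^r\sum_{(n_1,\dots,n_r)\in S_{i,r}}\prod_{j=1}^r\frac{B_{n_j}(a)}{n_j!}$. (These are the asymptotic coefficients at the origin of the Hurwitz multiple zeta function with all parameters equal to $a$.) *)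

theory Defs
  imports Complex_Main
begin

text \<open>Bernoulli polynomials with generating function x e^{ax}/(e^x - 1), via the
  recursion (n+1) a^n = sum_{k<=n} (n+1 choose k) B_k(a).\<close>
fun bernpoly :: "nat \<Rightarrow> real \<Rightarrow> real" where
  "bernpoly n a = a ^ n - (\<Sum>k<n. real ((Suc n) choose k) * bernpoly k a) / real (Suc n)"

declare bernpoly.simps [simp del]

text \<open>S_{i,r}: tuples (n_1,...,n_r) represented as lists ns with ns ! (j-1) = n_j.\<close>
definition S_set :: "nat \<Rightarrow> nat \<Rightarrow> nat list set" where
  "S_set i r = {ns. length ns = r \<and> sum_list ns = r
      \<and> (\<forall>j. 1 \<le> j \<and> j < i \<longrightarrow> (\<Sum>l<j. ns ! l) < j)
      \<and> (\<forall>j. i \<le> j \<and> j < r \<longrightarrow> (\<Sum>l\<in>{j..<r}. ns ! l) \<le> r - j)}"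

definition C_coef :: "nat \<Rightarrow> nat \<Rightarrow> real \<Rightarrow> real" where
  "C_coef i r a = (-1) ^ r * (\<Sum>ns\<in>S_set i r. \<Prod>j<r. bernpoly (ns ! j) a / fact (ns ! j))"

end

theory Submission
  imports Defs
begin


definition Q :: "nat list \<Rightarrow> nat \<Rightarrow> int" where
  "Q ns j = int (sum_list (take j ns)) - int j"

definition P :: "(nat \<Rightarrow> int \<Rightarrow> bool) \<Rightarrow> nat \<Rightarrow> nat list set" where
  "P c n = {ns. length ns = n \<and> sum_list ns = n \<and> (\<forall>j. 1 \<le> j \<and> j < n \<longrightarrow> c j (Q ns j))}"

definition W :: "(nat \<Rightarrow> real) \<Rightarrow> (nat \<Rightarrow> int \<Rightarrow> bool) \<Rightarrow> nat \<Rightarrow> real" where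
  "W f c n = (\<Sum>ns\<in>P c n. prod_list (map f ns))"

lemma prod_nth_conv: "(\<Prod>j<length ns. f (ns ! j)) = prod_list (map f ns)"
  by (induct ns) (simp_all add: prod.lessThan_Suc_shift del: prod.lessThan_Suc)

lemma sum_nth_conv: "j \<le> length ns \<Longrightarrow> (\<Sum>l<j. ns ! l) = sum_list (take j ns)"
  by (simp add: sum_list_sum_nth atLeast0LessThan)

lemma finite_P: "finite (P c n)"
proof -
  have "P c n \<subseteq> {xs. set xs \<subseteq> {..n} \<and> length xs = n}"
    unfolding P_def using member_le_sum_list by fastforce
  moreover have "finite {xs. set xs \<subseteq> {..n::nat} \<and> length xs = n}"
    by (rule finite_lists_length_eq) simp
  ultimately show ?thesis by (rule finite_subset)
qed

lemma Q0[simp]: "Q ns 0 = 0" by (simp add: Q_def)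

lemma Q_take: "l \<le> k \<Longrightarrow> Q (take k ns) l = Q ns l"
  by (simp add: Q_def min_absorb1)

lemma Q_drop: "Q (drop k ns) l = Q ns (k + l) - Q ns k"
  by (simp add: Q_def take_add)

lemma Q_full: "length ns = n \<Longrightarrow> Q ns n = int (sum_list ns) - int n"
  by (simp add: Q_def)

lemma W_cong: "(\<And>l q. 1 \<le> l \<Longrightarrow> l < n \<Longrightarrow> c l q = c' l q) \<Longrightarrow> W f c n = W f c' n"
  unfolding W_def P_def by (rule sum.cong) auto

lemma take_drop_P:
  assumes "length ns = n" "k \<le> n"
  shows "(take k ns \<in> P a k \<and> drop k ns \<in> P b (n - k)) \<longleftrightarrow>
    (sum_list ns = n \<and> Q ns k = 0 \<and> (\<forall>l. 1 \<le> l \<and> l < k \<longrightarrow> a l (Q ns l))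
      \<and> (\<forall>l. 1 \<le> l \<and> l < n - k \<longrightarrow> b l (Q ns (k + l))))"
proof -
  have s: "sum_list ns = sum_list (take k ns) + sum_list (drop k ns)"
    by (metis append_take_drop_id sum_list_append)
  have qk: "Q ns k = 0 \<longleftrightarrow> sum_list (take k ns) = k"
    by (simp add: Q_def)
  show ?thesis
    unfolding P_def using assms s qk
    by (auto simp: Q_take Q_drop)
qed

lemma split_W:
  assumes fin: "finite K" and Kle: "\<And>k. k \<in> K \<Longrightarrow> k \<le> n"
    and ex: "\<And>ns. ns \<in> P c n \<Longrightarrow> \<exists>k\<in>K. take k ns \<in> P (a k) k \<and> drop k ns \<in> P (b k) (n - k)"
    and snd: "\<And>k ns. k \<in> K \<Longrightarrow> length ns = n \<Longrightarrow> take k ns \<in> P (a k) k \<Longrightarrow> drop k ns \<in> P (b k) (n - k) \<Longrightarrow> ns \<in> P c n"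
    and uniq: "\<And>k k' ns. k \<in> K \<Longrightarrow> k' \<in> K \<Longrightarrow> length ns = n \<Longrightarrow>
       take k ns \<in> P (a k) k \<Longrightarrow> drop k ns \<in> P (b k) (n - k) \<Longrightarrow>
       take k' ns \<in> P (a k') k' \<Longrightarrow> drop k' ns \<in> P (b k') (n - k') \<Longrightarrow> k = k'"
  shows "W f c n = (\<Sum>k\<in>K. W f (a k) k * W f (b k) (n - k))"
proof -
  define A where "A k = (\<lambda>(x, y). x @ y) ` (P (a k) k \<times> P (b k) (n - k))" for k
  have prodeq: "W f (a k) k * W f (b k) (n - k) = (\<Sum>ns\<in>A k. prod_list (map f ns))" if "k \<in> K" for k
  proof -
    have inj: "inj_on (\<lambda>(x, y). x @ y) (P (a k) k \<times> P (b k) (n - k))"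
    proof (rule inj_onI)
      fix p p' assume h: "p \<in> P (a k) k \<times> P (b k) (n - k)" "p' \<in> P (a k) k \<times> P (b k) (n - k)"
        "(\<lambda>(x, y). x @ y) p = (\<lambda>(x, y). x @ y) p'"
      obtain x y x' y' where pp: "p = (x, y)" "p' = (x', y')" by fastforce
      have "length x = k" "length x' = k" using h(1,2) unfolding pp by (simp_all add: P_def)
      then show "p = p'" using h(3) unfolding pp by simp
    qed
    have "W f (a k) k * W f (b k) (n - k) =
        (\<Sum>(x,y)\<in>P (a k) k \<times> P (b k) (n - k). prod_list (map f x) * prod_list (map f y))"
      unfolding W_def sum_product sum.cartesian_product by simp
    also have "\<dots> = (\<Sum>p\<in>P (a k) k \<times> P (b k) (n - k). prod_list (map f ((\<lambda>(x, y). x @ y) p)))"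
      by (rule sum.cong) (simp_all add: case_prod_unfold)
    also have "\<dots> = (\<Sum>ns\<in>A k. prod_list (map f ns))"
      unfolding A_def sum.reindex[OF inj] o_def ..
    finally show ?thesis .
  qed
  have Aeq: "P c n = (\<Union>k\<in>K. A k)"
  proof
    show "P c n \<subseteq> (\<Union>k\<in>K. A k)"
    proof
      fix ns assume ns: "ns \<in> P c n"
      then obtain k where k: "k \<in> K" "take k ns \<in> P (a k) k" "drop k ns \<in> P (b k) (n - k)"
        using ex by blast
      have "ns = (\<lambda>(x, y). x @ y) (take k ns, drop k ns)" by simp
      moreover have "(take k ns, drop k ns) \<in> P (a k) k \<times> P (b k) (n - k)" using k(2,3) by (rule SigmaI)
      ultimately have "ns \<in> A k" unfolding A_def by (rule image_eqI)
      then show "ns \<in> (\<Union>k\<in>K. A k)" using k by blast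
    qed
  next
    show "(\<Union>k\<in>K. A k) \<subseteq> P c n"
    proof
      fix ns assume "ns \<in> (\<Union>k\<in>K. A k)"
      then obtain k where k0: "k \<in> K" "ns \<in> A k" by blast
      from k0(2) obtain p where p: "p \<in> P (a k) k \<times> P (b k) (n - k)" "ns = (\<lambda>(x, y). x @ y) p"
        unfolding A_def by (rule imageE)
      obtain x y where xy: "p = (x, y)" by fastforce
      have k: "k \<in> K" "x \<in> P (a k) k" "y \<in> P (b k) (n - k)" "ns = x @ y"
        using k0(1) p unfolding xy by simp_all
      have lx: "length x = k" "length y = n - k" using k(2,3) by (simp_all add: P_def)
      have kn: "k \<le> n" using Kle[OF k(1)] .
      have e: "take k ns = x" "drop k ns = y" "length ns = n" using k(4) lx kn by simp_all
      show "ns \<in> P c n" using snd[OF k(1) e(3)] k(2,3) unfolding e(1,2) by blast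
    qed
  qed
  have disj: "\<forall>i\<in>K. \<forall>j\<in>K. i \<noteq> j \<longrightarrow> A i \<inter> A j = {}"
  proof (intro ballI impI)
    fix i j assume ij: "i \<in> K" "j \<in> K" "i \<noteq> j"
    show "A i \<inter> A j = {}"
    proof (rule ccontr)
      assume "A i \<inter> A j \<noteq> {}"
      then obtain ns where ns: "ns \<in> A i" "ns \<in> A j" by blast
      from ns(1) obtain p where p: "p \<in> P (a i) i \<times> P (b i) (n - i)" "ns = (\<lambda>(x, y). x @ y) p"
        unfolding A_def by (rule imageE)
      from ns(2) obtain p' where p': "p' \<in> P (a j) j \<times> P (b j) (n - j)" "ns = (\<lambda>(x, y). x @ y) p'"
        unfolding A_def by (rule imageE)
      obtain x y x' y' where xy: "p = (x, y)" "p' = (x', y')" by fastforce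
      have h: "x \<in> P (a i) i" "y \<in> P (b i) (n - i)" "ns = x @ y"
        "x' \<in> P (a j) j" "y' \<in> P (b j) (n - j)" "ns = x' @ y'"
        using p p' unfolding xy by simp_all
      have l: "length x = i" "length y = n - i" "length x' = j" "length y' = n - j"
        using h(1,2,4,5) by (simp_all add: P_def)
      have le: "i \<le> n" "j \<le> n" using Kle ij(1,2) by blast+
      have e1: "take i ns = x" "drop i ns = y" "length ns = n" unfolding h(3) using l le by simp_all
      have e2: "take j ns = x'" "drop j ns = y'" unfolding h(6) using l le by simp_all
      note e = e1(1,2) e2 e1(3)
      have t: "take i ns \<in> P (a i) i" "drop i ns \<in> P (b i) (n - i)"
          "take j ns \<in> P (a j) j" "drop j ns \<in> P (b j) (n - j)"
        unfolding e(1-4) by (rule h(1), rule h(2), rule h(4), rule h(5))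
      have "i = j" by (rule uniq[OF ij(1,2) e(5) t])
      then show False using ij(3) by blast
    qed
  qed
  have "W f c n = (\<Sum>ns\<in>(\<Union>k\<in>K. A k). prod_list (map f ns))"
    unfolding W_def Aeq ..
  also have "\<dots> = (\<Sum>k\<in>K. \<Sum>ns\<in>A k. prod_list (map f ns))"
    proof (rule sum.UNION_disjoint[OF fin _ disj])
    show "\<forall>k\<in>K. finite (A k)" unfolding A_def using finite_P by blast
  qed
  also have "\<dots> = (\<Sum>k\<in>K. W f (a k) k * W f (b k) (n - k))"
    using prodeq by simp
  finally show ?thesis .
qed

lemma Q_rev:
  assumes "length ns = n" "sum_list ns = n" "j \<le> n"
  shows "Q (rev ns) j = - Q ns (n - j)"
proof -
  have "take j (rev ns) = rev (drop (n - j) ns)" using assms by (simp add: take_rev)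
  moreover have "sum_list ns = sum_list (take (n - j) ns) + sum_list (drop (n - j) ns)"
    by (metis append_take_drop_id sum_list_append)
  ultimately show ?thesis using assms by (simp add: Q_def sum_list_rev)
qed

lemma W_rev: "W f c n = W f (\<lambda>l q. c (n - l) (- q)) n"
  unfolding W_def
proof (rule sum.reindex_bij_witness[of _ rev rev])
  fix ns assume ns: "ns \<in> P (\<lambda>l q. c (n - l) (- q)) n"
  show "rev ns \<in> P c n"
    unfolding P_def
  proof (intro CollectI conjI allI impI)
    show "length (rev ns) = n" "sum_list (rev ns) = n" using ns by (auto simp: P_def sum_list_rev)
    fix j assume j: "1 \<le> j \<and> j < n"
    have "\<forall>j. 1 \<le> j \<and> j < n \<longrightarrow> c (n - j) (- Q ns j)" using ns unfolding P_def by blast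
    moreover have "1 \<le> n - j \<and> n - j < n" using j by auto
    ultimately have "c (n - (n - j)) (- Q ns (n - j))" by blast
    moreover have "n - (n - j) = j" using j by auto
    ultimately show "c j (Q (rev ns) j)" using ns j by (auto simp: P_def Q_rev)
  qed
next
  fix ns assume ns: "ns \<in> P c n"
  show "rev ns \<in> P (\<lambda>l q. c (n - l) (- q)) n"
    unfolding P_def
  proof (intro CollectI conjI allI impI)
    show "length (rev ns) = n" "sum_list (rev ns) = n" using ns by (auto simp: P_def sum_list_rev)
    fix j assume j: "1 \<le> j \<and> j < n"
    have "\<forall>j. 1 \<le> j \<and> j < n \<longrightarrow> c j (Q ns j)" using ns unfolding P_def by blast
    moreover have "1 \<le> n - j \<and> n - j < n" using j by auto
    ultimately have "c (n - j) (Q ns (n - j))" by blast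
    then show "c (n - j) (- Q (rev ns) j)" using ns j by (auto simp: P_def Q_rev)
  qed
qed (simp_all add: rev_map[symmetric] prod_list.rev)




definition "cT i = (\<lambda>l q. if l < i then q < 0 else (0::int) \<le> q)"
definition "cY i = (\<lambda>l q. if l < i then q < 0 else (0::int) < q)"
definition "cE = (\<lambda>(l::nat) q. (0::int) \<le> q)"
definition "cEb = (\<lambda>(l::nat) q. q \<le> (0::int))"
definition "cN = (\<lambda>(l::nat) q. q < (0::int))"
definition "cTb i = (\<lambda>l q. if l < i then q \<le> 0 else (0::int) < q)"

lemma P_iff: "ns \<in> P c n \<longleftrightarrow> length ns = n \<and> sum_list ns = n \<and> (\<forall>j. 1 \<le> j \<and> j < n \<longrightarrow> c j (Q ns j))"
  by (simp add: P_def)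

lemma Qn0: "length ns = n \<Longrightarrow> sum_list ns = n \<Longrightarrow> Q ns n = 0"
  by (simp add: Q_def)

lemma L2:
  assumes "1 \<le> j" "j \<le> r"
  shows "W f (cT j) r = (\<Sum>t\<in>{j..r}. W f (cY j) t * W f cE (r - t))"
proof (rule split_W)
  show "finite {j..r}" by simp
  show "\<And>k. k \<in> {j..r} \<Longrightarrow> k \<le> r" by simp
next
  fix ns assume ns: "ns \<in> P (cT j) r"
  have len: "length ns = r" and sm: "sum_list ns = r" and c: "\<And>l. 1 \<le> l \<Longrightarrow> l < r \<Longrightarrow> cT j l (Q ns l)"
    using ns by (auto simp: P_iff)
  define t where "t = (LEAST t. j \<le> t \<and> Q ns t = 0)"
  have ex: "j \<le> r \<and> Q ns r = 0" using assms Qn0[OF len sm] by simp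
  have t1: "j \<le> t \<and> Q ns t = 0" unfolding t_def by (rule LeastI[where P="\<lambda>t. j \<le> t \<and> Q ns t = 0", OF ex])
  have t2: "t \<le> r" unfolding t_def by (rule Least_le[where P="\<lambda>t. j \<le> t \<and> Q ns t = 0", OF ex])
  have t3: "\<And>l. j \<le> l \<Longrightarrow> l < t \<Longrightarrow> Q ns l \<noteq> 0"
    unfolding t_def using not_less_Least by blast
  have "take t ns \<in> P (cY j) t \<and> drop t ns \<in> P cE (r - t)"
    unfolding take_drop_P[OF len t2]
  proof (intro conjI allI impI)
    show "sum_list ns = r" "Q ns t = 0" using sm t1 by auto
  next
    fix l assume l: "1 \<le> l \<and> l < t"
    show "cY j l (Q ns l)" using c[of l] t3[of l] l t2 by (auto simp: cT_def cY_def)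
  next
    fix l assume l: "1 \<le> l \<and> l < r - t"
    show "cE l (Q ns (t + l))" using c[of "t + l"] l t1 by (auto simp: cT_def cE_def)
  qed
  then show "\<exists>k\<in>{j..r}. take k ns \<in> P (cY j) k \<and> drop k ns \<in> P cE (r - k)"
    using t1 t2 by auto
next
  fix k ns assume k: "k \<in> {j..r}" and len: "length ns = r"
    and h: "take k ns \<in> P (cY j) k" "drop k ns \<in> P cE (r - k)"
  have kr: "k \<le> r" using k by simp
  have H: "sum_list ns = r" "Q ns k = 0" "\<And>l. 1 \<le> l \<Longrightarrow> l < k \<Longrightarrow> cY j l (Q ns l)"
    "\<And>l. 1 \<le> l \<Longrightarrow> l < r - k \<Longrightarrow> cE l (Q ns (k + l))"
    using take_drop_P[OF len kr, of "cY j" cE] h by auto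
  show "ns \<in> P (cT j) r" unfolding P_iff
  proof (intro conjI allI impI)
    show "length ns = r" "sum_list ns = r" using len H by auto
    fix l assume l: "1 \<le> l \<and> l < r"
    consider "l < k" | "l = k" | "k < l" by linarith
    then show "cT j l (Q ns l)"
    proof cases
      case 1 then show ?thesis using H(3)[of l] l by (auto simp: cT_def cY_def)
    next
      case 2 then show ?thesis using H(2) k by (auto simp: cT_def)
    next
      case 3 then show ?thesis using H(4)[of "l - k"] l k by (auto simp: cT_def cE_def)
    qed
  qed
next
  fix k k' ns assume k: "k \<in> {j..r}" "k' \<in> {j..r}" and len: "length ns = r"
    and h: "take k ns \<in> P (cY j) k" "drop k ns \<in> P cE (r - k)"
      "take k' ns \<in> P (cY j) k'" "drop k' ns \<in> P cE (r - k')"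
  have kr: "k \<le> r" "k' \<le> r" using k by auto
  have H: "Q ns k = 0" "\<And>l. 1 \<le> l \<Longrightarrow> l < k \<Longrightarrow> cY j l (Q ns l)"
    using take_drop_P[OF len kr(1), of "cY j" cE] h(1,2) by auto
  have H': "Q ns k' = 0" "\<And>l. 1 \<le> l \<Longrightarrow> l < k' \<Longrightarrow> cY j l (Q ns l)"
    using take_drop_P[OF len kr(2), of "cY j" cE] h(3,4) by auto
  show "k = k'"
  proof (rule ccontr)
    assume "k \<noteq> k'"
    then consider "k < k'" | "k' < k" by linarith
    then show False
    proof cases
      case 1 then show ?thesis using H'(2)[of k] H(1) k assms by (auto simp: cY_def)
    next
      case 2 then show ?thesis using H(2)[of k'] H'(1) k assms by (auto simp: cY_def)
    qed
  qed
qed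




lemma L1b:
  assumes "1 \<le> n"
  shows "W f cEb n = (\<Sum>s\<in>{..<n}. W f cEb s * W f cN (n - s))"
proof (rule split_W)
  show "finite {..<n}" by simp
  show "\<And>k. k \<in> {..<n} \<Longrightarrow> k \<le> n" by simp
next
  fix ns assume ns: "ns \<in> P cEb n"
  have len: "length ns = n" and sm: "sum_list ns = n" and c: "\<And>l. 1 \<le> l \<Longrightarrow> l < n \<Longrightarrow> cEb l (Q ns l)"
    using ns by (auto simp: P_iff)
  define t where "t = (GREATEST t. t < n \<and> Q ns t = 0)"
  have ex: "0 < n \<and> Q ns 0 = 0" using assms by simp
  have bd: "\<And>y. y < n \<and> Q ns y = 0 \<Longrightarrow> y \<le> n" by simp
  have t1: "t < n \<and> Q ns t = 0" unfolding t_def by (rule GreatestI_nat[where P="\<lambda>t. t < n \<and> Q ns t = 0", OF ex bd])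
  have t3: "\<And>l. t < l \<Longrightarrow> l < n \<Longrightarrow> Q ns l \<noteq> 0"
    unfolding t_def using Greatest_le_nat[where P="\<lambda>t. t < n \<and> Q ns t = 0", OF _ bd] by force
  have t2: "t \<le> n" using t1 by simp
  have "take t ns \<in> P cEb t \<and> drop t ns \<in> P cN (n - t)"
    unfolding take_drop_P[OF len t2]
  proof (intro conjI allI impI)
    show "sum_list ns = n" "Q ns t = 0" using sm t1 by auto
  next
    fix l assume l: "1 \<le> l \<and> l < t"
    show "cEb l (Q ns l)" using c[of l] l t2 by auto
  next
    fix l assume l: "1 \<le> l \<and> l < n - t"
    have tl: "t + l < n" "t < t + l" using l by auto
    show "cN l (Q ns (t + l))" using c[of "t + l"] t3[OF tl(2) tl(1)] l tl by (auto simp: cEb_def cN_def)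
  qed
  then show "\<exists>k\<in>{..<n}. take k ns \<in> P cEb k \<and> drop k ns \<in> P cN (n - k)"
    using t1 by auto
next
  fix k ns assume k: "k \<in> {..<n}" and len: "length ns = n"
    and h: "take k ns \<in> P cEb k" "drop k ns \<in> P cN (n - k)"
  have kr: "k \<le> n" using k by simp
  have H: "sum_list ns = n" "Q ns k = 0" "\<And>l. 1 \<le> l \<Longrightarrow> l < k \<Longrightarrow> cEb l (Q ns l)"
    "\<And>l. 1 \<le> l \<Longrightarrow> l < n - k \<Longrightarrow> cN l (Q ns (k + l))"
    using take_drop_P[OF len kr, of cEb cN] h by auto
  show "ns \<in> P cEb n" unfolding P_iff
  proof (intro conjI allI impI)
    show "length ns = n" "sum_list ns = n" using len H by auto
    fix l assume l: "1 \<le> l \<and> l < n"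
    consider "l < k" | "l = k" | "k < l" by linarith
    then show "cEb l (Q ns l)"
    proof cases
      case 1 then show ?thesis using H(3)[of l] l by auto
    next
      case 2 then show ?thesis using H(2) k by (auto simp: cEb_def)
    next
      case 3
      have "1 \<le> l - k" "l - k < n - k" using 3 l by arith+
      then show ?thesis using H(4)[of "l - k"] 3 by (auto simp: cEb_def cN_def)
    qed
  qed
next
  fix k k' ns assume k: "k \<in> {..<n}" "k' \<in> {..<n}" and len: "length ns = n"
    and h: "take k ns \<in> P cEb k" "drop k ns \<in> P cN (n - k)"
      "take k' ns \<in> P cEb k'" "drop k' ns \<in> P cN (n - k')"
  have kr: "k \<le> n" "k' \<le> n" using k by auto
  have H: "Q ns k = 0" "\<And>l. 1 \<le> l \<Longrightarrow> l < n - k \<Longrightarrow> cN l (Q ns (k + l))"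
    using take_drop_P[OF len kr(1), of cEb cN] h(1,2) by auto
  have H': "Q ns k' = 0" "\<And>l. 1 \<le> l \<Longrightarrow> l < n - k' \<Longrightarrow> cN l (Q ns (k' + l))"
    using take_drop_P[OF len kr(2), of cEb cN] h(3,4) by auto
  show "k = k'"
  proof (rule ccontr)
    assume "k \<noteq> k'"
    then consider "k < k'" | "k' < k" by linarith
    then show False
    proof cases
      case 1
      have "1 \<le> k' - k" "k' - k < n - k" "k + (k' - k) = k'" using 1 k by auto
      then show ?thesis using H(2)[of "k' - k"] H'(1) by (auto simp: cN_def)
    next
      case 2
      have "1 \<le> k - k'" "k - k' < n - k'" "k' + (k - k') = k" using 2 k by auto
      then show ?thesis using H'(2)[of "k - k'"] H(1) by (auto simp: cN_def)
    qed
  qed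
qed

lemma E_Eb: "W f cE n = W f cEb n"
  by (subst W_rev) (rule W_cong, auto simp: cE_def cEb_def)

lemma L1:
  assumes "1 \<le> n"
  shows "W f cE n = (\<Sum>s\<in>{..<n}. W f cE s * W f cN (n - s))"
  using L1b[OF assms] by (simp add: E_Eb)

lemma Y_rev:
  assumes "1 \<le> i" "i \<le> r"
  shows "W f (cY i) r = W f (cY (r - i + 1)) r"
  by (subst W_rev) (rule W_cong, auto simp: cY_def)

lemma T_rev:
  assumes "i < r"
  shows "W f (cT (Suc i)) r = W f (cTb (r - i)) r"
  by (subst W_rev) (rule W_cong, auto simp: cT_def cTb_def)

lemma E0: "W f cE 0 = 1"
proof -
  have "P cE 0 = {[]}" by (auto simp: P_def)
  then show ?thesis by (simp add: W_def)
qed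

lemma Q_Cons: "Q (x # xs) (Suc l) = int x + Q xs l - 1"
  by (simp add: Q_def)

lemma Q_snoc: "l \<le> length xs \<Longrightarrow> Q (xs @ [y]) l = Q xs l"
  by (simp add: Q_def)

lemma Rot:
  assumes "1 \<le> m" "m < r"
  shows "W f (cTb m) r = W f (cT (Suc m)) r"
  unfolding W_def
proof (rule sum.reindex_bij_witness[of _ "\<lambda>ns. tl ns @ [hd ns]" "\<lambda>ys. last ys # butlast ys"])
  fix ys assume ys: "ys \<in> P (cTb m) r"
  have len: "length ys = r" and sm: "sum_list ys = r" and c: "\<And>l. 1 \<le> l \<Longrightarrow> l < r \<Longrightarrow> cTb m l (Q ys l)"
    using ys by (auto simp: P_iff)
  obtain zs y where zs: "ys = zs @ [y]" using len assms by (cases ys rule: rev_exhaust) auto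
  have lz: "length zs = r - 1" using len zs by simp
  have q1: "Q ys (r - 1) > 0" using c[of "r - 1"] assms by (auto simp: cTb_def)
  have q2: "Q ys (r - 1) = int (sum_list zs) - int (r - 1)" unfolding zs using lz
    by (simp add: Q_snoc Q_full)
  have "int (sum_list zs) + int y = int r" using sm zs by simp
  then have y0: "y = 0" using q1 q2 assms by linarith
  have qz: "\<And>l. l \<le> r - 1 \<Longrightarrow> Q zs l = Q ys l" unfolding zs using lz by (simp add: Q_snoc)
  show "tl (last ys # butlast ys) @ [hd (last ys # butlast ys)] = ys" using zs by simp
  show "last ys # butlast ys \<in> P (cT (Suc m)) r" unfolding P_iff
  proof (intro conjI allI impI)
    show "length (last ys # butlast ys) = r" using len assms by simp
    show "sum_list (last ys # butlast ys) = r" using sm zs y0 by simp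
    fix l assume l: "1 \<le> l \<and> l < r"
    then obtain l' where l': "l = Suc l'" by (cases l) auto
    have qq: "Q (last ys # butlast ys) l = Q ys l' - 1" using zs y0 l' l qz[of l'] by (simp add: Q_Cons)
    show "cT (Suc m) l (Q (last ys # butlast ys) l)"
    proof (cases "l' = 0")
      case True then show ?thesis using qq l' assms by (simp add: cT_def)
    next
      case False then show ?thesis using qq l' l c[of l'] by (auto simp: cT_def cTb_def)
    qed
  qed
  show "prod_list (map f (last ys # butlast ys)) = prod_list (map f ys)"
    using zs by (simp add: mult.commute)
next
  fix ns assume ns: "ns \<in> P (cT (Suc m)) r"
  have len: "length ns = r" and sm: "sum_list ns = r" and c: "\<And>l. 1 \<le> l \<Longrightarrow> l < r \<Longrightarrow> cT (Suc m) l (Q ns l)"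
    using ns by (auto simp: P_iff)
  obtain x xs where xs: "ns = x # xs" using len assms by (cases ns) auto
  have "Q ns 1 < 0" using c[of 1] assms by (auto simp: cT_def)
  then have x0: "x = 0" using xs by (simp add: Q_def)
  have lx: "length xs = r - 1" using len xs by simp
  have qn: "\<And>l. Q ns (Suc l) = Q xs l - 1" using xs x0 by (simp add: Q_Cons)
  have qr: "Q ns r = 0" using Qn0[OF len sm] .
  show "last (tl ns @ [hd ns]) # butlast (tl ns @ [hd ns]) = ns" using xs by simp
  show "tl ns @ [hd ns] \<in> P (cTb m) r" unfolding P_iff
  proof (intro conjI allI impI)
    show "length (tl ns @ [hd ns]) = r" using len assms by simp
    show "sum_list (tl ns @ [hd ns]) = r" using sm xs x0 by simp
    fix l assume l: "1 \<le> l \<and> l < r"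
    have ll: "l \<le> length xs" using l lx by arith
    have qq: "Q (tl ns @ [hd ns]) l = Q ns (Suc l) + 1" using xs qn[of l] Q_snoc[OF ll, of x] by simp
    show "cTb m l (Q (tl ns @ [hd ns]) l)"
    proof (cases "Suc l = r")
      case True then show ?thesis using qq qr l assms by (auto simp: cTb_def)
    next
      case False then show ?thesis using qq l c[of "Suc l"] by (auto simp: cT_def cTb_def)
    qed
  qed
qed




lemma S_eq:
  assumes "i \<le> r"
  shows "S_set i r = P (cT i) r"
proof (rule set_eqI)
  fix ns
  show "ns \<in> S_set i r \<longleftrightarrow> ns \<in> P (cT i) r"
  proof (cases "length ns = r \<and> sum_list ns = r")
    case False then show ?thesis by (auto simp: S_set_def P_def)
  next
    case True
    then have len: "length ns = r" and sm: "sum_list ns = r" by auto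
    have pre: "\<And>j. j \<le> r \<Longrightarrow> (\<Sum>l<j. ns ! l) = sum_list (take j ns)"
      using len by (simp add: sum_nth_conv)
    have tk: "\<And>j. sum_list (take j ns) + sum_list (drop j ns) = r"
      using sm by (metis append_take_drop_id sum_list_append)
    have suf: "\<And>j. j \<le> r \<Longrightarrow> (\<Sum>l\<in>{j..<r}. ns ! l) = sum_list (drop j ns)"
    proof -
      fix j assume j: "j \<le> r"
      have "(\<Sum>l<j. ns ! l) + (\<Sum>l\<in>{j..<r}. ns ! l) = (\<Sum>l<r. ns ! l)"
        using j by (simp add: lessThan_atLeast0 sum.atLeastLessThan_concat)
      moreover have "sum_list (take r ns) = r" using len sm by simp
      ultimately show "(\<Sum>l\<in>{j..<r}. ns ! l) = sum_list (drop j ns)"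
        using pre[OF j] pre[of r] tk[of j] by simp
    qed
    have A: "(\<forall>j. 1 \<le> j \<and> j < i \<longrightarrow> (\<Sum>l<j. ns ! l) < j) \<longleftrightarrow>
             (\<forall>j. 1 \<le> j \<and> j < i \<longrightarrow> Q ns j < 0)"
      using pre assms by (auto simp: Q_def)
    have B: "(\<forall>j. i \<le> j \<and> j < r \<longrightarrow> (\<Sum>l\<in>{j..<r}. ns ! l) \<le> r - j) \<longleftrightarrow>
             (\<forall>j. i \<le> j \<and> j < r \<longrightarrow> 0 \<le> Q ns j)"
    proof -
      have "\<And>j. j < r \<Longrightarrow> ((\<Sum>l\<in>{j..<r}. ns ! l) \<le> r - j) \<longleftrightarrow> 0 \<le> Q ns j"
      proof -
        fix j assume j: "j < r"
        have "sum_list (take j ns) + sum_list (drop j ns) = r" by (rule tk)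
        then show "((\<Sum>l\<in>{j..<r}. ns ! l) \<le> r - j) \<longleftrightarrow> 0 \<le> Q ns j"
          using suf[of j] j by (auto simp: Q_def)
      qed
      then show ?thesis by blast
    qed
    have C: "(\<forall>j. 1 \<le> j \<and> j < r \<longrightarrow> cT i j (Q ns j)) \<longleftrightarrow>
        (\<forall>j. 1 \<le> j \<and> j < i \<longrightarrow> Q ns j < 0) \<and> (\<forall>j. i \<le> j \<and> j < r \<longrightarrow> 0 \<le> Q ns j)"
    proof
      assume h: "\<forall>j. 1 \<le> j \<and> j < r \<longrightarrow> cT i j (Q ns j)"
      show "(\<forall>j. 1 \<le> j \<and> j < i \<longrightarrow> Q ns j < 0) \<and> (\<forall>j. i \<le> j \<and> j < r \<longrightarrow> 0 \<le> Q ns j)"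
      proof (intro conjI allI impI)
        fix j assume j: "1 \<le> j \<and> j < i"
        then have "cT i j (Q ns j)" using h assms by simp
        then show "Q ns j < 0" using j by (simp add: cT_def)
      next
        fix j assume j: "i \<le> j \<and> j < r"
        show "0 \<le> Q ns j"
        proof (cases "j = 0")
          case True then show ?thesis by simp
        next
          case False
          then have "cT i j (Q ns j)" using h j by simp
          then show ?thesis using j by (simp add: cT_def)
        qed
      qed
    next
      assume h: "(\<forall>j. 1 \<le> j \<and> j < i \<longrightarrow> Q ns j < 0) \<and> (\<forall>j. i \<le> j \<and> j < r \<longrightarrow> 0 \<le> Q ns j)"
      show "\<forall>j. 1 \<le> j \<and> j < r \<longrightarrow> cT i j (Q ns j)"
      proof (intro allI impI)
        fix j assume j: "1 \<le> j \<and> j < r"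
        show "cT i j (Q ns j)"
        proof (cases "j < i")
          case True then show ?thesis using h j by (simp add: cT_def)
        next
          case False then show ?thesis using h j by (simp add: cT_def)
        qed
      qed
    qed
    show ?thesis unfolding S_set_def P_def using True A B C by auto
  qed
qed

lemma C_eq:
  assumes "i \<le> r"
  shows "C_coef i r a = (-1) ^ r * W (\<lambda>n. bernpoly n a / fact n) (cT i) r"
  unfolding C_coef_def W_def S_eq[OF assms]
  by (rule arg_cong[where f="\<lambda>x. (-1) ^ r * x"], rule sum.cong) (auto simp: P_def prod_nth_conv[symmetric])

lemma D_eq: "W f cN n = W f (cT n) n"
  by (rule W_cong) (simp add: cN_def cT_def)

lemma Hlem:
  assumes "1 \<le> j" "j \<le> r"
  shows "(\<Sum>k\<in>{j..<r}. W f (cT j) k * W f (cT (r - k)) (r - k)) = W f (cT j) r - W f (cY j) r"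
proof -
  define Y where "Y t = W f (cY j) t" for t
  define E where "E t = W f cE t" for t
  define D where "D t = W f cN t" for t
  have "(\<Sum>k\<in>{j..<r}. W f (cT j) k * W f (cT (r - k)) (r - k))
      = (\<Sum>k\<in>{j..<r}. \<Sum>t\<in>{t \<in> {j..<r}. t \<le> k}. Y t * E (k - t) * D (r - k))"
  proof (rule sum.cong)
    fix k assume k: "k \<in> {j..<r}"
    have "{t \<in> {j..<r}. t \<le> k} = {j..k}" using k by auto
    then show "W f (cT j) k * W f (cT (r - k)) (r - k) = (\<Sum>t\<in>{t \<in> {j..<r}. t \<le> k}. Y t * E (k - t) * D (r - k))"
      using L2[of j k f] assms k by (simp add: Y_def E_def D_def D_eq sum_distrib_right)
  qed simp
  also have "\<dots> = (\<Sum>t\<in>{j..<r}. \<Sum>k\<in>{k \<in> {j..<r}. t \<le> k}. Y t * E (k - t) * D (r - k))"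
    by (rule sum.swap_restrict) simp_all
  also have "\<dots> = (\<Sum>t\<in>{j..<r}. Y t * E (r - t))"
  proof (rule sum.cong)
    fix t assume t: "t \<in> {j..<r}"
    have s1: "{k \<in> {j..<r}. t \<le> k} = {0 + t..<(r - t) + t}" using t by auto
    have "(\<Sum>k\<in>{k \<in> {j..<r}. t \<le> k}. E (k - t) * D (r - k)) = (\<Sum>s\<in>{0..<r - t}. E s * D (r - t - s))"
      unfolding s1 sum.shift_bounds_nat_ivl by (simp add: add.commute)
    also have "\<dots> = E (r - t)"
    proof -
      have "1 \<le> r - t" using t by auto
      from L1[OF this, of f] show ?thesis by (simp add: E_def D_def atLeast0LessThan)
    qed
    finally have fin: "(\<Sum>k\<in>{k \<in> {j..<r}. t \<le> k}. E (k - t) * D (r - k)) = E (r - t)" .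
    have "(\<Sum>k\<in>{k \<in> {j..<r}. t \<le> k}. Y t * E (k - t) * D (r - k))
        = Y t * (\<Sum>k\<in>{k \<in> {j..<r}. t \<le> k}. E (k - t) * D (r - k))"
      by (simp only: sum_distrib_left mult.assoc)
    then show "(\<Sum>k\<in>{k \<in> {j..<r}. t \<le> k}. Y t * E (k - t) * D (r - k)) = Y t * E (r - t)"
      by (simp only: fin)
  qed simp
  also have "\<dots> = W f (cT j) r - W f (cY j) r"
  proof -
    have "{j..r} = insert r {j..<r}" using assms by auto
    then have "W f (cT j) r = (\<Sum>t\<in>{j..<r}. Y t * E (r - t)) + Y r * E 0"
      using L2[OF assms, of f] by (simp add: Y_def E_def add.commute)
    then show ?thesis using E0[of f] by (simp add: E_def Y_def)
  qed
  finally show ?thesis .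
qed

theorem theorem6p1:
  fixes i r :: nat and a :: real
  assumes "1 \<le> i" and "i < r"
  shows "C_coef (Suc i) r a = C_coef i r a
    + (\<Sum>k = r - i + 1..r - 1. C_coef (r - i + 1) k a * C_coef (r - k) (r - k) a)
    - (\<Sum>k = i..r - 1. C_coef i k a * C_coef (r - k) (r - k) a)"
proof -
  define f where "f n = bernpoly n a / fact n" for n
  define T where "T j k = W f (cT j) k" for j k
  have fe: "(\<lambda>n. bernpoly n a / fact n) = f" by (simp add: f_def fun_eq_iff)
  have Ceq: "\<And>j k. j \<le> k \<Longrightarrow> C_coef j k a = (-1) ^ k * T j k"
    by (simp add: C_eq fe T_def)
  have rng: "\<And>m. {m..r - 1} = {m..<r}" using assms by auto
  have sumc: "\<And>j. j \<le> r \<Longrightarrow> (\<Sum>k\<in>{j..<r}. C_coef j k a * C_coef (r - k) (r - k) a)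
        = (-1) ^ r * (\<Sum>k\<in>{j..<r}. T j k * T (r - k) (r - k))"
  proof -
    fix j assume j: "j \<le> r"
    have "(\<Sum>k\<in>{j..<r}. C_coef j k a * C_coef (r - k) (r - k) a)
        = (\<Sum>k\<in>{j..<r}. (-1) ^ r * (T j k * T (r - k) (r - k)))"
    proof (rule sum.cong)
      fix k assume k: "k \<in> {j..<r}"
      have "(-1::real) ^ k * (-1) ^ (r - k) = (-1) ^ r"
        using k by (simp add: power_add[symmetric])
      then show "C_coef j k a * C_coef (r - k) (r - k) a = (-1) ^ r * (T j k * T (r - k) (r - k))"
        using k Ceq[of j k] Ceq[of "r - k" "r - k"] by (simp add: algebra_simps)
    qed simp
    then show "(\<Sum>k\<in>{j..<r}. C_coef j k a * C_coef (r - k) (r - k) a)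
        = (-1) ^ r * (\<Sum>k\<in>{j..<r}. T j k * T (r - k) (r - k))"
      by (simp add: sum_distrib_left)
  qed
  have H1: "(\<Sum>k\<in>{r - i + 1..<r}. T (r - i + 1) k * T (r - k) (r - k)) = T (r - i + 1) r - W f (cY (r - i + 1)) r"
    using Hlem[of "r - i + 1" r f] assms by (simp add: T_def)
  have H2: "(\<Sum>k\<in>{i..<r}. T i k * T (r - k) (r - k)) = T i r - W f (cY i) r"
    using Hlem[of i r f] assms by (simp add: T_def)
  have Yr: "W f (cY i) r = W f (cY (r - i + 1)) r" using Y_rev[of i r f] assms by simp
  have Tr: "T (Suc i) r = T (r - i + 1) r"
    using T_rev[of i r f] Rot[of "r - i" r f] assms by (simp add: T_def)
  have s1: "(\<Sum>k\<in>{r - i + 1..<r}. C_coef (r - i + 1) k a * C_coef (r - k) (r - k) a)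
        = (-1) ^ r * (T (r - i + 1) r - W f (cY (r - i + 1)) r)"
    using sumc[of "r - i + 1"] H1 assms by simp
  have s2: "(\<Sum>k\<in>{i..<r}. C_coef i k a * C_coef (r - k) (r - k) a)
        = (-1) ^ r * (T i r - W f (cY (r - i + 1)) r)"
    using sumc[of i] H2 Yr assms by simp
  have c1: "C_coef (Suc i) r a = (-1) ^ r * T (r - i + 1) r" using Ceq[of "Suc i" r] Tr assms by simp
  have c2: "C_coef i r a = (-1) ^ r * T i r" using Ceq[of i r] assms by simp
  show ?thesis
    unfolding rng s1 s2 c1 c2 by (simp add: algebra_simps)
qed


end
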